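(* Let $-\beta\in(0,1)$ and $c\in(0,1)$, and let $n\geq 2$ be an integer. Denote the zeros of the monic Meixner polynomial $M_n(x;\beta,c)$ by $z_{1,n}<z_{2,n}<\dots<z_{n,n}$ (they are real and distinct). Then $$z_{1,n}<0<1<z_{2,n}.$$
   Context: Monic Meixner polynomials are defined by $$M_n(x;\beta,c)=\left(\frac{c}{c-1}\right)^n(\beta)_n\sum_{k=0}^{n}\frac{(-n)_k(-x)_k(1-\frac1c)^k}{(\beta)_k\,k!},$$ for real $\beta,c$ with $c\neq 0$ and $\beta\notin\{-1,-2,\dots,-n+1\}$, where $(\alpha)_0=1$ and $(\alpha)_k=\alpha(\alpha+1)\cdots(\alpha+k-1)$ for $k\geq1$. For $-\beta,c\in(0,1)$ and $n\ge 2$, the zeros of $M_n(x;\beta,c)$ are known to be real and distinct. *)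

theory Defs
  imports "HOL-Analysis.Analysis"
begin

definition meixner :: "nat \<Rightarrow> real \<Rightarrow> real \<Rightarrow> real \<Rightarrow> real" where
  "meixner n \<beta> c x =
     (c / (c - 1)) ^ n * pochhammer \<beta> n *
     (\<Sum>k=0..n. pochhammer (- real n) k * pochhammer (- x) k * (1 - 1 / c) ^ k
                 / (pochhammer \<beta> k * fact k))"

end

theory Submission
  imports Defs "HOL-Analysis.Analysis"
begin

lemma binom_series:
  fixes g c :: real assumes "0 < c" "c < 1"
  shows "(\<lambda>j. pochhammer g j * c^j / fact j) sums ((1-c) powr (-g))"
proof -
  have "(\<lambda>j. ((-g) gchoose j) * (-c)^j) sums (1 + (-c)) powr (-g)"
    by (rule gen_binomial_real) (use assms in auto)
  moreover have "((-g) gchoose j) * (-c)^j = pochhammer g j * c^j / fact j" for j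
    by (simp add: gbinomial_pochhammer power_mult_distrib[symmetric])
  ultimately show ?thesis by simp
qed

lemma binom_series_lin:
  fixes g c :: real assumes "0 < c" "c < 1"
  shows "(\<lambda>j. real j * pochhammer g j * c^j / fact j) sums (c * g * (1-c) powr (-g-1))"
proof -
  define f where "f = (\<lambda>j. real j * pochhammer g j * c^j / fact j)"
  have 1: "(\<lambda>i. c * g * (pochhammer (g+1) i * c^i / fact i)) sums (c * g * (1-c) powr (-(g+1)))"
    by (rule sums_mult, rule binom_series) (use assms in auto)
  have "c * g * (pochhammer (g+1) i * c^i / fact i) = f (i+1)" for i
  proof -
    have f: "fact (i+1) = real (i+1) * (fact i :: real)" by simp
    have p: "pochhammer g (i+1) = g * pochhammer (g+1) i" by (simp add: pochhammer_rec)
    show ?thesis unfolding f_def f p by (simp add: field_simps del: of_nat_Suc)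
  qed
  then have "(\<lambda>i. f (i+1)) = (\<lambda>i. c * g * (pochhammer (g+1) i * c^i / fact i))" by auto
  moreover have "-(g+1) = -g-1" by simp
  ultimately have "(\<lambda>i. f (i+1)) sums (c * g * (1-c) powr (-g-1))" using 1 by simp
  then have "f sums (c * g * (1-c) powr (-g-1) + (\<Sum>i<1. f i))"
    by (rule iffD1[OF sums_iff_shift])
  then show ?thesis by (simp add: f_def)
qed

lemma poch_shift_fact: "pochhammer (real j + 1) k * fact j = (fact (j+k) :: real)"
proof (induction k)
  case 0 then show ?case by simp
next
  case (Suc k)
  have "pochhammer (real j + 1) (Suc k) * fact j = (real j + 1 + k) * (pochhammer (real j + 1) k * fact j)"
    by (simp add: pochhammer_rec')
  also have "\<dots> = fact (j + Suc k)" using Suc by (simp add: algebra_simps)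
  finally show ?case .
qed

lemma series_k:
  fixes \<beta> c :: real assumes "0 < c" "c < 1"
  shows "(\<lambda>m. pochhammer \<beta> m * c^m / fact m * real m * pochhammer (- real m) k) sums
     ((-1)^k * pochhammer \<beta> k * c^k * ((1-c) powr (-\<beta>-k-1) * (c*\<beta> + k)))"
proof -
  define g where "g = \<beta> + real k"
  define F where "F = (\<lambda>m. pochhammer \<beta> m * c^m / fact m * real m * pochhammer (- real m) k)"
  have s1: "(\<lambda>j. real j * pochhammer g j * c^j / fact j + real k * (pochhammer g j * c^j / fact j))
      sums (c * g * (1-c) powr (-g-1) + real k * (1-c) powr (-g))"
    by (intro sums_add sums_mult binom_series_lin binom_series assms)
  have "(1-c) powr (-g) = (1-c) powr (-g-1) * (1-c)"
  proof -
    have "(1-c) powr (-g-1) * (1-c) = (1-c) powr (-g-1) * (1-c) powr 1" using assms by simp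
    also have "\<dots> = (1-c) powr (-g)" by (subst powr_add[symmetric]) simp
    finally show ?thesis by simp
  qed
  then have "c * g * (1-c) powr (-g-1) + real k * (1-c) powr (-g) = (1-c) powr (-\<beta>-k-1) * (c*\<beta> + k)"
  proof -
    have e: "-\<beta>-real k-1 = -g-1" by (simp add: g_def)
    show ?thesis unfolding e \<open>(1-c) powr (-g) = _\<close> by (simp add: g_def algebra_simps)
  qed
  with s1 have s2: "(\<lambda>j. (-1)^k * pochhammer \<beta> k * c^k * (real j * pochhammer g j * c^j / fact j + real k * (pochhammer g j * c^j / fact j)))
      sums ((-1)^k * pochhammer \<beta> k * c^k * ((1-c) powr (-\<beta>-k-1) * (c*\<beta> + k)))"
    by (intro sums_mult) simp
  have "(-1)^k * pochhammer \<beta> k * c^k * (real j * pochhammer g j * c^j / fact j + real k * (pochhammer g j * c^j / fact j))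
        = F (j + k)" for j
  proof -
    have p1: "pochhammer (- real (j+k)) k = (-1)^k * pochhammer (real j + 1) k"
      using pochhammer_minus[of "real (j+k)" k] by simp
    have p2: "pochhammer \<beta> (j+k) = pochhammer \<beta> k * pochhammer g j"
      unfolding g_def by (subst add.commute) (rule pochhammer_product')
    have f: "fact (j+k) = pochhammer (real j + 1) k * (fact j :: real)"
      by (simp add: poch_shift_fact)
    have nz: "pochhammer (real j + 1) k \<noteq> 0" by (intro pochhammer_pos[THEN less_imp_neq, symmetric]) simp
    show ?thesis unfolding F_def p1 p2 f using nz
      by (simp add: field_simps power_add)
  qed
  with s2 have "(\<lambda>j. F (j + k)) sums ((-1)^k * pochhammer \<beta> k * c^k * ((1-c) powr (-\<beta>-k-1) * (c*\<beta> + k)))"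
    by simp
  then have "F sums ((-1)^k * pochhammer \<beta> k * c^k * ((1-c) powr (-\<beta>-k-1) * (c*\<beta> + k)) + (\<Sum>i<k. F i))"
    by (rule iffD1[OF sums_iff_shift])
  moreover have "(\<Sum>i<k. F i) = 0"
    by (rule sum.neutral) (auto simp: F_def pochhammer_of_nat_eq_0_iff)
  ultimately show ?thesis by (simp add: F_def)
qed


definition Dk :: "nat \<Rightarrow> real \<Rightarrow> nat \<Rightarrow> real" where
  "Dk n c k = pochhammer (- real n) k * (1 - 1/c)^k / fact k"
definition Rk :: "real \<Rightarrow> real \<Rightarrow> nat \<Rightarrow> real" where
  "Rk \<beta> x k = pochhammer (- x) k / pochhammer \<beta> k"
definition PP :: "nat \<Rightarrow> real \<Rightarrow> real \<Rightarrow> real \<Rightarrow> real" where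
  "PP n \<beta> c x = (\<Sum>k=0..n. Dk n c k * Rk \<beta> x k)"

lemma meix_eq: "meixner n \<beta> c x = (c/(c-1))^n * pochhammer \<beta> n * PP n \<beta> c x"
  unfolding meixner_def PP_def Dk_def Rk_def
  by (intro arg_cong2[where f="(*)"] refl sum.cong) (simp_all add: field_simps)

context
  fixes \<beta> c :: real and n :: nat
  assumes b0: "0 < - \<beta>" and b1: "- \<beta> < 1" and c0: "0 < c" and c1: "c < 1" and n2: "n \<ge> 2"
begin

lemma poch_nz: "pochhammer \<beta> k \<noteq> 0"
proof
  assume "pochhammer \<beta> k = 0"
  then obtain j where "\<beta> = - of_nat j" by (auto simp: pochhammer_eq_0_iff)
  with b0 b1 show False by (cases j) auto
qed

lemma poch_neg: "k \<ge> 1 \<Longrightarrow> pochhammer \<beta> k < 0"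
proof (cases k)
  case (Suc m)
  have "pochhammer (\<beta>+1) m > 0" using b1 by (intro pochhammer_pos) simp
  with b0 show ?thesis by (simp add: Suc pochhammer_rec mult_neg_pos)
qed simp

lemma D_nonneg: "Dk n c k \<ge> 0"
proof (cases "k \<le> n")
  case True
  have "pochhammer (- real n) k * (1 - 1/c)^k = (\<Prod>i\<in>{0..<k}. (- real n + real i) * (1 - 1/c))"
    by (simp add: pochhammer_prod prod.distrib)
  also have "\<dots> \<ge> 0"
  proof (rule prod_nonneg)
    fix i assume "i \<in> {0..<k}"
    with True have "- real n + real i < 0" by auto
    moreover have "1 - 1/c < 0" using c0 c1 by (simp add: field_simps)
    ultimately show "0 \<le> (- real n + real i) * (1 - 1/c)" by (simp add: mult_neg_neg less_imp_le)
  qed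
  finally show ?thesis unfolding Dk_def by simp
next
  case False
  then show ?thesis unfolding Dk_def using pochhammer_of_nat_eq_0_lemma[of n k, where ?'a=real] by simp
qed

lemma D1_pos: "Dk n c 1 > 0"
proof -
  have "1 - 1/c < 0" using c0 c1 by (simp add: field_simps)
  moreover have "real n > 0" using n2 by simp
  ultimately show ?thesis unfolding Dk_def by (simp add: mult_pos_neg)
qed

lemma R_prod: "Rk \<beta> x k = (\<Prod>i\<in>{0..<k}. (- x + real i) / (\<beta> + real i))"
  unfolding Rk_def pochhammer_prod by (simp add: prod_dividef)

lemma R_nonneg01: "0 \<le> x \<Longrightarrow> x \<le> 1 \<Longrightarrow> Rk \<beta> x k \<ge> 0"
  unfolding R_prod
proof (rule prod_nonneg)
  fix i assume x: "0 \<le> x" "x \<le> 1" and "i \<in> {0..<k}"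
  show "0 \<le> (- x + real i) / (\<beta> + real i)"
  proof (cases i)
    case 0 then show ?thesis using x b0 by (simp add: divide_nonneg_neg)
  next
    case (Suc j) then show ?thesis using x b1 by (intro divide_nonneg_pos) auto
  qed
qed

lemma R0: "Rk \<beta> x 0 = 1" unfolding Rk_def by simp
lemma R1: "Rk \<beta> x 1 = - x / \<beta>" unfolding Rk_def by simp
lemma R_at0: "k \<ge> 1 \<Longrightarrow> Rk \<beta> 0 k = 0" unfolding Rk_def by (simp add: pochhammer_0_left)

lemma R_mono: assumes "x1 \<le> x2" "x2 \<le> 0" shows "Rk \<beta> x1 k \<le> Rk \<beta> x2 k"
proof (cases k)
  case 0 then show ?thesis by (simp add: R0)
next
  case (Suc m)
  define Q where "Q = (\<lambda>x. \<Prod>i\<in>{0..<m}. (- x + real (Suc i)) / (\<beta> + real (Suc i)))"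
  have RQ: "Rk \<beta> x k = (- x / \<beta>) * Q x" for x
    unfolding R_prod Suc Q_def prod.atLeast0_lessThan_Suc_shift by simp
  have hi: "0 \<le> (- x2 + real (Suc i)) / (\<beta> + real (Suc i)) \<and>
      (- x2 + real (Suc i)) / (\<beta> + real (Suc i)) \<le> (- x1 + real (Suc i)) / (\<beta> + real (Suc i))" for i
  proof -
    have d: "\<beta> + real (Suc i) > 0" using b1 by simp
    show ?thesis using d assms by (auto intro: divide_right_mono)
  qed
  have Q: "0 \<le> Q x2 \<and> Q x2 \<le> Q x1" unfolding Q_def
    using hi by (auto intro!: prod_nonneg prod_mono)
  have f: "- x1 / \<beta> \<le> - x2 / \<beta>" "- x2 / \<beta> \<le> 0"
    using assms b0 by (auto intro: divide_right_mono_neg divide_nonneg_neg divide_nonpos_neg)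
  have "(- x1 / \<beta>) * Q x1 \<le> (- x2 / \<beta>) * Q x1"
    using f Q by (intro mult_right_mono) auto
  also have "\<dots> \<le> (- x2 / \<beta>) * Q x2"
    using f Q by (intro mult_left_mono_neg) auto
  finally show ?thesis unfolding RQ .
qed

lemma PP_split: "PP n \<beta> c x = 1 + Dk n c 1 * Rk \<beta> x 1 + (\<Sum>k=2..n. Dk n c k * Rk \<beta> x k)"
proof -
  have "PP n \<beta> c x = Dk n c 0 * Rk \<beta> x 0 + (Dk n c 1 * Rk \<beta> x 1 + (\<Sum>k=Suc 1..n. Dk n c k * Rk \<beta> x k))"
    unfolding PP_def using n2 by (simp add: sum.atLeast_Suc_atMost)
  then show ?thesis by (simp add: R0 Dk_def numeral_2_eq_2)
qed

lemma PP_ge1: "0 \<le> x \<Longrightarrow> x \<le> 1 \<Longrightarrow> PP n \<beta> c x \<ge> 1"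
  unfolding PP_split using D_nonneg R_nonneg01 D1_pos
  by (smt (verit) mult_nonneg_nonneg sum_nonneg)

lemma PP_0: "PP n \<beta> c 0 = 1"
  unfolding PP_split by (simp add: R_at0)

lemma term_nonpos: "x \<le> 0 \<Longrightarrow> k \<ge> 1 \<Longrightarrow> Dk n c k * Rk \<beta> x k \<le> 0"
  using mult_left_mono[OF R_mono[of x 0 k] D_nonneg] by (simp add: R_at0)

lemma PP_le: "x \<le> 0 \<Longrightarrow> PP n \<beta> c x \<le> 1 + Dk n c 1 * Rk \<beta> x 1"
  unfolding PP_split using term_nonpos[of x]
  by (smt (verit) atLeastAtMost_iff sum_nonpos numeral_le_iff one_le_numeral le_trans)

lemma PP_strict: assumes "x1 < x2" "x2 \<le> 0" shows "PP n \<beta> c x1 < PP n \<beta> c x2"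
  unfolding PP_def
proof (rule sum_strict_mono_ex1)
  show "\<forall>k\<in>{0..n}. Dk n c k * Rk \<beta> x1 k \<le> Dk n c k * Rk \<beta> x2 k"
    using assms by (auto intro!: mult_left_mono R_mono D_nonneg)
  have "Rk \<beta> x1 1 < Rk \<beta> x2 1" unfolding R1 using assms b0
    by (intro divide_strict_right_mono_neg) auto
  then show "\<exists>k\<in>{0..n}. Dk n c k * Rk \<beta> x1 k < Dk n c k * Rk \<beta> x2 k"
    using D1_pos n2 by (intro bexI[of _ 1]) auto
qed simp

lemma PP_cont: "continuous_on S (PP n \<beta> c)"
  unfolding PP_def Rk_def by (intro continuous_intros) (simp add: poch_nz)


lemma term_eq: "Dk n c k / pochhammer \<beta> k * ((-1)^k * pochhammer \<beta> k * c^k * ((1-c) powr (-\<beta>-k-1) * (c*\<beta> + k)))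
   = (1-c) powr (-\<beta>-1) * ((-1)^k * real (n choose k)) * (c*\<beta> + k)"
proof -
  have ch: "(-1)^k * real (n choose k) = pochhammer (- real n) k / fact k"
    using gbinomial_pochhammer[of "real n" k] by (simp add: binomial_gbinomial)
  have ac: "(1 - 1/c) * c = c - 1" using c0 by (simp add: field_simps)
  have pw: "(1-c)^k * (1-c) powr (-\<beta>-k-1) = (1-c) powr (-\<beta>-1)"
  proof -
    have "(1-c)^k = (1-c) powr (real k)" using c1 by (simp add: powr_realpow)
    moreover have e: "-\<beta>-1 = real k + (-\<beta>-k-1)" by simp
    ultimately show ?thesis by (simp only: e powr_add)
  qed
  have "(-1)^k * (1 - 1/c)^k * c^k = (1-c)^k"
  proof -
    have "(-1)^k * (1 - 1/c)^k * c^k = ((-1) * (1 - 1/c) * c)^k" by (simp only: power_mult_distrib)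
    also have "(-1) * (1 - 1/c) * c = 1 - c" using c0 by (simp add: field_simps)
    finally show ?thesis .
  qed
  have "Dk n c k / pochhammer \<beta> k * ((-1)^k * pochhammer \<beta> k * c^k * ((1-c) powr (-\<beta>-k-1) * (c*\<beta> + k)))
     = (pochhammer (- real n) k / fact k) * ((-1)^k * (1 - 1/c)^k * c^k) * (1-c) powr (-\<beta>-k-1) * (c*\<beta> + k)"
    unfolding Dk_def using poch_nz[of k] by (simp add: field_simps)
  also have "\<dots> = (pochhammer (- real n) k / fact k) * ((1-c)^k * (1-c) powr (-\<beta>-k-1)) * (c*\<beta> + k)"
    unfolding \<open>(-1)^k * (1 - 1/c)^k * c^k = (1-c)^k\<close> by (simp add: mult_ac)
  also have "\<dots> = (1-c) powr (-\<beta>-1) * ((-1)^k * real (n choose k)) * (c*\<beta> + k)"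
    unfolding pw ch by (simp add: mult_ac)
  finally show ?thesis .
qed

lemma total_zero: "(\<Sum>k=0..n. Dk n c k / pochhammer \<beta> k * ((-1)^k * pochhammer \<beta> k * c^k * ((1-c) powr (-\<beta>-k-1) * (c*\<beta> + k)))) = 0"
proof -
  have "(\<Sum>k=0..n. Dk n c k / pochhammer \<beta> k * ((-1)^k * pochhammer \<beta> k * c^k * ((1-c) powr (-\<beta>-k-1) * (c*\<beta> + k))))
     = (\<Sum>k\<le>n. (1-c) powr (-\<beta>-1) * ((-1)^k * real (n choose k)) * (c*\<beta> + k))"
    by (simp only: term_eq atLeast0AtMost)
  also have "\<dots> = (1-c) powr (-\<beta>-1) * (c*\<beta> * (\<Sum>k\<le>n. (-1)^k * real (n choose k))
        + (\<Sum>k\<le>n. (-1)^k * real k * real (n choose k)))"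
    by (simp add: sum_distrib_left sum.distrib algebra_simps)
  also have "\<dots> = 0"
    using choose_alternating_sum[of n, where 'a=real] choose_alternating_linear_sum[of n, where 'a=real] n2
    by simp
  finally show ?thesis .
qed

lemma exists_neg: "\<exists>m::nat. m \<ge> 2 \<and> PP n \<beta> c (real m) < 0"
proof (rule ccontr)
  assume H: "\<not> ?thesis"
  define w where "w m = pochhammer \<beta> m * c^m / fact m" for m
  define T where "T k = (-1)^k * pochhammer \<beta> k * c^k * ((1-c) powr (-\<beta>-k-1) * (c*\<beta> + k))" for k
  define f where "f m = w m * real m * PP n \<beta> c (real m)" for m
  have fe: "f m = (\<Sum>k\<in>{0..n}. Dk n c k / pochhammer \<beta> k * (w m * real m * pochhammer (- real m) k))" for m
    unfolding f_def PP_def Rk_def by (simp add: sum_distrib_left mult_ac)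
  have "(\<lambda>m. \<Sum>k\<in>{0..n}. Dk n c k / pochhammer \<beta> k * (w m * real m * pochhammer (- real m) k))
      sums (\<Sum>k\<in>{0..n}. Dk n c k / pochhammer \<beta> k * T k)"
    unfolding w_def T_def by (intro sums_sum sums_mult series_k c0 c1)
  then have fs: "f sums 0" unfolding fe[abs_def] total_zero[folded T_def] by simp
  have p1: "PP n \<beta> c 1 \<ge> 1" by (rule PP_ge1) auto
  have f1: "f 1 < 0"
    unfolding f_def w_def using p1 b0 c0 by (simp add: mult_neg_pos)
  have le: "f m \<le> (if m = 1 then f m else 0)" for m
  proof (cases "m \<ge> 2")
    case True
    have "w m < 0" unfolding w_def using poch_neg[of m] True c0
      by (simp add: divide_neg_pos mult_neg_pos)
    moreover have "PP n \<beta> c (real m) \<ge> 0" using H True by auto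
    ultimately show ?thesis unfolding f_def using True
      by (simp add: mult_nonpos_nonneg mult_nonpos_nonneg[of _ "PP n \<beta> c (real m)"])
  next
    case False
    then have "m = 0 \<or> m = 1" by auto
    then show ?thesis unfolding f_def by auto
  qed
  have "0 \<le> f 1" by (rule sums_le[OF le fs sums_single])
  with f1 show False by simp
qed

end


theorem proposition3p1:
  fixes \<beta> c :: real and n :: nat
  assumes "0 < - \<beta>" "- \<beta> < 1" "0 < c" "c < 1" "n \<ge> 2"
  shows "\<exists>z1 z2. meixner n \<beta> c z1 = 0 \<and> meixner n \<beta> c z2 = 0 \<and> z1 < z2
            \<and> (\<forall>x. meixner n \<beta> c x = 0 \<longrightarrow> x = z1 \<or> z2 \<le> x)
            \<and> z1 < 0 \<and> 1 < z2"
proof -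
  let ?P = "PP n \<beta> c"
  have K: "(c/(c-1))^n * pochhammer \<beta> n \<noteq> 0" using poch_nz[OF assms] assms by simp
  have Z: "meixner n \<beta> c x = 0 \<longleftrightarrow> ?P x = 0" for x using K assms by (simp add: meix_eq)
  have cont: "continuous_on S ?P" for S by (rule PP_cont[OF assms])
  define D where "D = Dk n c 1"
  have D: "D > 0" unfolding D_def by (rule D1_pos[OF assms])
  define x0 where "x0 = -2 * (-\<beta>) / D"
  have x0: "x0 < 0" unfolding x0_def using D assms by (simp add: divide_neg_pos)
  have "?P x0 \<le> 1 + D * Rk \<beta> x0 1" unfolding D_def by (rule PP_le[OF assms]) (use x0 in simp)
  also have "D * Rk \<beta> x0 1 = -2" unfolding R1[OF assms] x0_def using D assms by (simp add: field_simps)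
  finally have Px0: "?P x0 < 0" by simp
  obtain z1 where z1: "x0 \<le> z1" "z1 \<le> 0" "?P z1 = 0"
    using IVT'[of ?P x0 0 0] Px0 x0 cont by (auto simp: PP_0[OF assms])
  have z1n: "z1 < 0" using z1 PP_0[OF assms] by (cases "z1 = 0") auto
  obtain m :: nat where m: "m \<ge> 2" "?P (real m) < 0" using exists_neg[OF assms] by blast
  have P1: "?P 1 \<ge> 1" by (rule PP_ge1[OF assms]) auto
  define S where "S = {x \<in> {1..real m}. ?P x = 0}"
  obtain y where "1 \<le> y" "y \<le> real m" "?P y = 0"
    using IVT2'[of ?P "real m" 0 1] m P1 cont by auto
  then have Sne: "S \<noteq> {}" unfolding S_def by auto
  have "closed S" unfolding S_def by (intro continuous_closed_preimage_constant cont closed_atLeastAtMost)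
  moreover have "bounded S" by (rule bounded_subset[of "{1..real m}"]) (auto simp: S_def)
  ultimately have "compact S" by (simp add: compact_eq_bounded_closed)
  then obtain z2 where z2: "z2 \<in> S" "\<forall>t\<in>S. z2 \<le> t" using compact_attains_inf[OF _ Sne] by blast
  have z2P: "?P z2 = 0" "1 \<le> z2" "z2 \<le> real m" using z2 unfolding S_def by auto
  have z2g: "1 < z2" using z2P P1 by (cases "z2 = 1") auto
  show ?thesis
  proof (intro exI conjI allI impI)
    show "meixner n \<beta> c z1 = 0" "meixner n \<beta> c z2 = 0" using Z z1 z2P by auto
    show "z1 < z2" using z1n z2g by simp
    show "z1 < 0" "1 < z2" by fact+
    fix x assume "meixner n \<beta> c x = 0"
    then have Px: "?P x = 0" using Z by simp
    show "x = z1 \<or> z2 \<le> x"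
    proof (cases "x < 0")
      case True
      have "x = z1"
      proof (rule ccontr)
        assume "x \<noteq> z1"
        then have "x < z1 \<or> z1 < x" by auto
        then show False
          using PP_strict[OF assms, of x z1] PP_strict[OF assms, of z1 x] True z1 Px by auto
      qed
      then show ?thesis by simp
    next
      case False
      show ?thesis
      proof (cases "x \<le> 1")
        case True
        then show ?thesis using PP_ge1[OF assms, of x] False Px by simp
      next
        case x1: False
        show ?thesis
        proof (cases "x \<le> real m")
          case True
          then have "x \<in> S" unfolding S_def using x1 Px by auto
          then show ?thesis using z2 by auto
        next
          case False
          then show ?thesis using z2P by simp
        qed
      qed
    qed
  qed
qed

end
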